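(* In the standing setup, assume $A$ is generic and $\det f_0'(x)$ is not identically zero. Then for all $x\in\mathbb R^6$ and $\varepsilon\in\mathbb R$, $$\det(I-\varepsilon f_0'(x))=s_1(x,\varepsilon)s_2(x,\varepsilon)s_3(x,\varepsilon),$$ where $s_1=1-2\varepsilon^2(q_2+q_3)$, $s_2=1-2\varepsilon^2(q_1+q_3)$, $s_3=1-2\varepsilon^2(q_1+q_2)$.
   Context: Standing setup: $J=\begin{pmatrix}0&I_3\\-I_3&0\end{pmatrix}$ ($6\times6$). $A$ is a fixed real $6\times 6$ skew-Hamiltonian matrix ($A^{\rm T}J=JA$). $H_0$ is a homogeneous cubic polynomial on $\mathbb R^6$ with $A\nabla^2H_0(x)=\nabla^2H_0(x)A^{\rm T}$ for all $x$ ($\nabla^2$ = Hesse matrix), $f_0=J\nabla H_0$, with Jacobi matrix $f_0'$. Genericity: the characteristic polynomial of $A$ (a square of a cubic) has three pairwise distinct roots $\lambda_1,\lambda_2,\lambda_3$, each a double eigenvalue. $B_i=\alpha_iI+\beta_iA+\gamma_iA^2$ ($i=1,2,3$), where $\alpha_i+\beta_i\lambda+\gamma_i\lambda^2$ is the unique polynomial of degree $\le2$ equal to $-1$ at $\lambda_i$ and to $1$ at the other two eigenvalues. $q_i(x)=\tfrac18\operatorname{tr}(B_i^{\rm T}(f_0'(x))^2)$. *)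

theory Defs
  imports "HOL-Analysis.Analysis"
begin

text \<open>Vectors in R^6 are real^6; indices of the numeral type 6 are of_nat 0, ..., of_nat 5.
  The standard symplectic matrix J = [[0, I3], [-I3, 0]].\<close>
definition Jsymp :: "real^6^6" where
  "Jsymp = (\<chi> i j. if (\<exists>k<3. i = of_nat k \<and> j = of_nat (k + 3)) then 1
                  else if (\<exists>k<3. i = of_nat (k + 3) \<and> j = of_nat k) then -1 else 0)"

definition grad :: "(real^'n \<Rightarrow> real) \<Rightarrow> real^'n \<Rightarrow> real^'n" where
  "grad H x = (\<chi> i. frechet_derivative H (at x) (axis i 1))"

definition hessian :: "(real^'n \<Rightarrow> real) \<Rightarrow> real^'n \<Rightarrow> real^'n^'n" where
  "hessian H x = jacobian (grad H) (at x)"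

definition homogeneous_cubic :: "(real^'n \<Rightarrow> real) \<Rightarrow> bool" where
  "homogeneous_cubic H \<longleftrightarrow> (\<exists>c :: 'n \<Rightarrow> 'n \<Rightarrow> 'n \<Rightarrow> real.
      \<forall>x. H x = (\<Sum>i\<in>UNIV. \<Sum>j\<in>UNIV. \<Sum>k\<in>UNIV. c i j k * x$i * x$j * x$k))"

definition cmat :: "real^'n^'m \<Rightarrow> complex^'n^'m" where
  "cmat M = (\<chi> i j. complex_of_real (M$i$j))"

end

theory Submission
  imports Defs
begin


lemma UNIV6: "(UNIV::6 set) = {0,1,2,3,4,5}"
proof -
  have "x \<in> {0,1,2,3,4,5}" for x :: 6
  proof (induct x)
    case (of_int z)
    then have "z=0 \<or> z=1 \<or> z=2 \<or> z=3 \<or> z=4 \<or> z=5" by auto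
    then show ?case by auto
  qed
  thus ?thesis by auto
qed
lemma sum6: "sum f (UNIV::6 set) = f 0 + f 1 + f 2 + f 3 + f 4 + f 5"
  unfolding UNIV6 apply (subst sum.insert, simp, simp)+ apply (simp add: add.assoc) done
lemma forall6: "(\<forall>i::6. P i) \<longleftrightarrow> P 0 \<and> P 1 \<and> P 2 \<and> P 3 \<and> P 4 \<and> P 5"
proof -
  have "(\<forall>i::6. P i) = (\<forall>i\<in>{0,1,2,3,4,5}. P i)" by (simp add: UNIV6[symmetric])
  then show ?thesis by simp
qed
lemma Jsymp_nth: "Jsymp $ i $ j = (if (i=0\<and>j=3)\<or>(i=1\<and>j=4)\<or>(i=2\<and>j=5) then 1
   else if (i=3\<and>j=0)\<or>(i=4\<and>j=1)\<or>(i=5\<and>j=2) then -1 else 0)"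
proof -
  have e: "(\<exists>k::nat<3. P k) \<longleftrightarrow> P 0 \<or> P 1 \<or> P 2" for P
    by (auto simp: less_Suc_eq numeral_3_eq_3 numeral_2_eq_2)
  show ?thesis unfolding Jsymp_def by (simp add: e)
qed

lemma Jsymp_transpose: "transpose Jsymp = - Jsymp"
  by (simp add: vec_eq_iff transpose_def Jsymp_nth forall6)

lemma Jsymp_sq: "Jsymp ** Jsymp = - mat 1"
  by (simp add: vec_eq_iff matrix_matrix_mult_def sum6 forall6 mat_def Jsymp_nth)


lemma cmat_nth[simp]: "cmat M $ i $ j = complex_of_real (M$i$j)" by (simp add: cmat_def)

lemma cmat_mult: "cmat (A ** B) = cmat A ** cmat B"
  by (simp add: vec_eq_iff matrix_matrix_mult_def)

lemma cmat_transpose: "cmat (transpose A) = transpose (cmat A)"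
  by (simp add: vec_eq_iff transpose_def)

lemma cmat_diff: "cmat (A - B) = cmat A - cmat B"
  by (simp add: vec_eq_iff)

lemma cmat_uminus: "cmat (- A) = - cmat A"
  by (simp add: vec_eq_iff)

lemma cmat_mat: "cmat (mat c) = mat (complex_of_real c)"
  by (simp add: vec_eq_iff mat_def)

lemma mat_mult_nth: "(mat c ** (X::'a::comm_ring_1^'n^'m)) $ i $ j = c * X $ i $ j"
proof -
  have "(\<Sum>k\<in>UNIV. (if i = k then c else 0) * X$k$j) = (\<Sum>k\<in>UNIV. if k = i then c * X$k$j else 0)"
    by (rule sum.cong) auto
  then show ?thesis by (simp add: matrix_matrix_mult_def mat_def)
qed

lemma cmat_scaleR: "cmat (r *\<^sub>R A) = mat (complex_of_real r) ** cmat A"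
  by (simp add: vec_eq_iff mat_mult_nth)

lemma det_cmat: "det (cmat A) = complex_of_real (det A)"
  unfolding det_def by (simp add: of_real_sum of_real_prod)



lemma det_neg: "det (- A :: 'a::comm_ring_1^'n^'n) = (-1)^CARD('n) * det A"
proof -
  have "- A = (\<chi> i. (-1) *s (A $ i))" by (simp add: vec_eq_iff)
  then show ?thesis using det_rows_mul[of "\<lambda>i. -1" "\<lambda>i. A $ i"] by simp
qed

lemma det_ne0_iff: fixes A :: "'a::field^'n^'n"
  shows "det A \<noteq> 0 \<longleftrightarrow> (\<forall>x. A *v x = 0 \<longrightarrow> x = 0)"
proof -
  have "det A \<noteq> 0 \<longleftrightarrow> inj ((*v) A)"
    using det_nz_iff_inj_gen[of "(*v) A"] by simp
  also have "\<dots> \<longleftrightarrow> (\<forall>x. A *v x = 0 \<longrightarrow> x = 0)"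
  proof
    assume "inj ((*v) A)" then show "\<forall>x. A *v x = 0 \<longrightarrow> x = 0"
      by (metis injD matrix_vector_mult_0_right)
  next
    assume h: "\<forall>x. A *v x = 0 \<longrightarrow> x = 0"
    show "inj ((*v) A)"
    proof (rule injI)
      fix x y assume "A *v x = A *v y"
      then have "A *v (x - y) = 0" by (simp add: matrix_vector_mult_diff_distrib)
      then show "x = y" using h by auto
    qed
  qed
  finally show ?thesis .
qed

lemma mv_nth: "(A *v x) $ i = (\<Sum>j\<in>UNIV. A$i$j * x$j)"
  by (simp add: matrix_vector_mult_def)

lemma mm_nth: "(A ** B) $ i $ j = (\<Sum>k\<in>UNIV. A$i$k * B$k$j)"
  by (simp add: matrix_matrix_mult_def)

lemma mm_neg_r: "A ** (- B) = - (A ** B :: 'a::comm_ring_1^_^_)" by (simp add: vec_eq_iff mm_nth sum_negf)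
lemma mm_neg_l: "(- A) ** B = - (A ** B :: 'a::comm_ring_1^_^_)" by (simp add: vec_eq_iff mm_nth sum_negf)

lemma skew_kernel:
  fixes K :: "complex^'n^'n" and v :: "complex^'n"
  assumes skew: "transpose K = - K" and ev: "even CARD('n)" and kv: "K *v v = 0" and v0: "v \<noteq> 0"
  shows "\<exists>x. K *v x = 0 \<and> (\<forall>c. x \<noteq> c *s v)"
proof -
  obtain k where vk: "v$k \<noteq> 0" using v0 by (metis vec_eq_iff zero_index)
  define T :: "complex^'n^'n" where "T = (\<chi> i j. if j = k then v$i else if i = j then 1 else 0)"
  define ek :: "complex^'n" where "ek = axis k 1"
  have Tek: "T *v ek = v"
  proof -
    have "(\<Sum>j\<in>UNIV. T$i$j * ek$j) = v$i" for i
    proof -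
      have "(\<Sum>j\<in>UNIV. T$i$j * ek$j) = (\<Sum>j\<in>UNIV. if j = k then v$i else 0)"
        by (rule sum.cong) (auto simp: T_def ek_def axis_def)
      then show ?thesis by simp
    qed
    then show ?thesis by (simp add: vec_eq_iff mv_nth)
  qed
  have Tcomp: "(T *v y) $ i = v$i * y$k + (if i = k then 0 else y$i)" for y i
  proof -
    have "(\<Sum>j\<in>UNIV. T$i$j * y$j) = (\<Sum>j\<in>UNIV. (if j = k then v$i * y$k else 0) + (if j = i \<and> i \<noteq> k then y$i else 0))"
      by (rule sum.cong) (auto simp: T_def)
    also have "\<dots> = v$i * y$k + (if i = k then 0 else y$i)"
      by (simp add: sum.distrib)
    finally show ?thesis by (simp add: mv_nth)
  qed
  have Tinj: "y = 0" if "T *v y = 0" for y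
  proof -
    have "v$k * y$k = 0" using Tcomp[of y k] that by simp
    then have yk: "y$k = 0" using vk by simp
    have "y$i = 0" for i using Tcomp[of y i] that yk by (cases "i = k") auto
    then show ?thesis by (simp add: vec_eq_iff)
  qed
  have TTcomp: "(transpose T *v z) $ j = (if j = k then (\<Sum>i\<in>UNIV. v$i * z$i) else z$j)" for z j
  proof (cases "j = k")
    case True then show ?thesis by (simp add: mv_nth transpose_def T_def)
  next
    case False
    have "(\<Sum>i\<in>UNIV. T$i$j * z$i) = (\<Sum>i\<in>UNIV. if i = j then z$i else 0)"
      by (rule sum.cong) (auto simp: T_def False)
    then show ?thesis using False by (simp add: mv_nth transpose_def mult.commute)
  qed
  have TTinj: "z = 0" if "transpose T *v z = 0" for z
  proof -
    have zj: "z$j = 0" if "j \<noteq> k" for j using TTcomp[of z j] \<open>transpose T *v z = 0\<close> that by simp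
    have "(\<Sum>i\<in>UNIV. v$i * z$i) = (\<Sum>i\<in>UNIV. if i = k then v$k * z$k else 0)"
      by (rule sum.cong) (auto simp: zj)
    then have "v$k * z$k = 0" using TTcomp[of z k] that by simp
    then have "z$k = 0" using vk by simp
    then show ?thesis using zj by (metis vec_eq_iff zero_index)
  qed
  define K' where "K' = transpose T ** K ** T"
  have skew': "transpose K' = - K'"
  proof -
    have "transpose K' = transpose T ** transpose K ** T"
      by (simp add: K'_def matrix_transpose_mul matrix_mul_assoc)
    also have "\<dots> = - K'"
      by (simp add: skew K'_def mm_neg_r mm_neg_l)
    finally show ?thesis .
  qed
  have colk: "K' $ i $ k = 0" for i
  proof -
    have "K' *v ek = 0"
      by (simp add: K'_def matrix_vector_mul_assoc[symmetric] Tek kv)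
    moreover have "(K' *v ek) $ i = K' $ i $ k"
    proof -
      have "(\<Sum>j\<in>UNIV. K'$i$j * ek$j) = (\<Sum>j\<in>UNIV. if j = k then K'$i$k else 0)"
        by (rule sum.cong) (auto simp: ek_def axis_def)
      then show ?thesis by (simp add: mv_nth)
    qed
    ultimately show ?thesis by simp
  qed
  have rowk: "K' $ k $ j = 0" for j
  proof -
    have "transpose K' $ j $ k = (- K') $ j $ k" using skew' by simp
    then show ?thesis using colk[of j] by (simp add: transpose_def)
  qed
  define L :: "complex^'n^'n" where "L = (\<chi> i j. K'$i$j + (if i = k \<and> j = k then 1 else 0))"
  have "det L = 0"
  proof -
    have sk: "K'$j$i = - K'$i$j" for i j
    proof -
      have "transpose K' $ j $ i = (-K') $ j $ i" using skew' by simp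
      then show ?thesis by (simp add: transpose_def)
    qed
    have "transpose L $ i $ j = (- (\<chi> i. if i = k then (-1) *s L $ i else L $ i)) $ i $ j" for i j
    proof (cases "i = k")
      case True then show ?thesis by (simp add: L_def transpose_def rowk colk)
    next
      case False then show ?thesis using sk[of i j] by (simp add: L_def transpose_def)
    qed
    then have "transpose L = - (\<chi> i. if i = k then (-1) *s L $ i else L $ i)"
      by (simp add: vec_eq_iff)
    then have "det L = det (- (\<chi> i. if i = k then (-1) *s L $ i else L $ i))"
      by (metis det_transpose)
    also have "\<dots> = det (\<chi> i. if i = k then (-1) *s L $ i else L $ i)"
      using ev by (simp add: det_neg)
    also have "\<dots> = - det (\<chi> i. if i = k then L $ i else L $ i)"
      using det_row_mul[of k "-1" "\<lambda>i. L $ i" "\<lambda>i. L $ i"] by simp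
    also have "(\<chi> i. if i = k then L $ i else L $ i) = L" by (simp add: vec_eq_iff)
    finally show ?thesis by simp
  qed
  then obtain y where y0: "y \<noteq> 0" and Ly: "L *v y = 0" using det_ne0_iff[of L] by blast
  have Lcomp: "(L *v y) $ i = (K' *v y) $ i + (if i = k then y$k else 0)" for i
  proof -
    have "(\<Sum>j\<in>UNIV. L$i$j * y$j) = (\<Sum>j\<in>UNIV. K'$i$j * y$j + (if j = k \<and> i = k then y$k else 0))"
      by (rule sum.cong) (auto simp: L_def algebra_simps)
    then show ?thesis by (simp add: mv_nth sum.distrib)
  qed
  have K'yk: "(K' *v y) $ k = 0" by (simp add: mv_nth rowk)
  have yk: "y$k = 0" using Lcomp[of k] Ly K'yk by simp
  have K'y: "K' *v y = 0"
  proof -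
    have "(K' *v y) $ i = 0" for i using Lcomp[of i] Ly yk by (cases "i = k") auto
    then show ?thesis by (simp add: vec_eq_iff)
  qed
  define x where "x = T *v y"
  have "transpose T *v (K *v x) = 0"
    using K'y by (simp add: x_def K'_def matrix_vector_mul_assoc matrix_mul_assoc)
  then have Kx: "K *v x = 0" using TTinj by blast
  have "x \<noteq> c *s v" for c
  proof
    assume "x = c *s v"
    then have "T *v y = T *v (c *s ek)" by (simp add: x_def Tek vec.scale)
    then have "T *v (y - c *s ek) = 0" by (simp add: matrix_vector_mult_diff_distrib)
    then have "y - c *s ek = 0" using Tinj by blast
    then have "y = c *s ek" by simp
    then have "c = 0" using yk by (simp add: ek_def axis_def)
    then show False using \<open>y = c *s ek\<close> y0 by simp
  qed
  then show ?thesis using Kx by blast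
qed



lemma det_block2:
  fixes Y :: "'a::comm_ring_1^'n^'n"
  assumes ab: "a \<noteq> b"
    and outside: "\<And>i j. i \<notin> {a,b} \<or> j \<notin> {a,b} \<Longrightarrow> Y$i$j = (if i = j then 1 else 0)"
  shows "det Y = Y$a$a * Y$b$b - Y$a$b * Y$b$a"
proof -
  let ?S = "{p. p permutes (UNIV::'n set)}"
  let ?sw = "Transposition.transpose a b"
  let ?f = "\<lambda>p. of_int (sign p) * prod (\<lambda>i. Y$i$p i) (UNIV :: 'n set)"
  have zero: "?f p = 0" if p: "p \<in> ?S - {id, ?sw}" for p
  proof -
    have pp: "p permutes UNIV" using p by simp
    have "\<exists>x. x \<notin> {a,b} \<and> p x \<noteq> x"
    proof (rule ccontr)
      assume "\<not> ?thesis"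
      then have fx: "\<And>x. x \<notin> {a,b} \<Longrightarrow> p x = x" by blast
      have inj: "\<And>x y. p x = p y \<Longrightarrow> x = y" using pp by (meson permutes_inj injD)
      have pa: "p a \<in> {a,b}"
      proof (rule ccontr)
        assume "p a \<notin> {a,b}"
        then have "p (p a) = p a" using fx by blast
        then have "p a = a" using inj by blast
        then show False using \<open>p a \<notin> {a,b}\<close> by simp
      qed
      have pb: "p b \<in> {a,b}"
      proof (rule ccontr)
        assume "p b \<notin> {a,b}"
        then have "p (p b) = p b" using fx by blast
        then have "p b = b" using inj by blast
        then show False using \<open>p b \<notin> {a,b}\<close> by simp
      qed
      have "p = id \<or> p = ?sw"
      proof (cases "p a = a")
        case True
        then have "p b = b" using pb inj ab by auto
        then have "p = id" using fx True by (metis eq_id_iff insertCI singletonD insertE)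
        then show ?thesis by simp
      next
        case False
        then have "p a = b" using pa by simp
        then have "p b = a" using pb inj ab by auto
        then have "p = ?sw" using fx \<open>p a = b\<close>
          by (auto simp: fun_eq_iff Transposition.transpose_def)
        then show ?thesis by simp
      qed
      then show False using p by simp
    qed
    then obtain x where x: "x \<notin> {a,b}" "p x \<noteq> x" by blast
    have "Y$x$p x = 0" using outside[of x "p x"] x by simp
    then have "prod (\<lambda>i. Y$i$p i) UNIV = 0"
      by (meson UNIV_I finite prod_zero)
    then show ?thesis by simp
  qed
  have sub: "{id, ?sw} \<subseteq> ?S" by (auto simp: permutes_id permutes_swap_id)
  have "det Y = sum ?f ?S" by (simp add: det_def)
  also have "\<dots> = sum ?f {id, ?sw}"
    by (rule sum.mono_neutral_right) (use sub zero in auto)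
  also have "\<dots> = ?f id + ?f ?sw"
    using ab by (subst sum.insert) (auto simp: fun_eq_iff Transposition.transpose_def)
  also have "?f id = Y$a$a * Y$b$b"
  proof -
    have "prod (\<lambda>i. Y$i$i) UNIV = prod (\<lambda>i. Y$i$i) {a,b} * prod (\<lambda>i. Y$i$i) (UNIV - {a,b})"
      by (metis (no_types, lifting) finite prod.subset_diff top_greatest mult.commute)
    also have "prod (\<lambda>i. Y$i$i) (UNIV - {a,b}) = 1"
      by (rule prod.neutral) (use outside in auto)
    finally show ?thesis using ab by simp
  qed
  also have "?f ?sw = - (Y$a$b * Y$b$a)"
  proof -
    have "prod (\<lambda>i. Y$i$?sw i) UNIV = prod (\<lambda>i. Y$i$?sw i) {a,b} * prod (\<lambda>i. Y$i$?sw i) (UNIV - {a,b})"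
      by (metis (no_types, lifting) finite prod.subset_diff top_greatest mult.commute)
    also have "prod (\<lambda>i. Y$i$?sw i) (UNIV - {a,b}) = 1"
      by (rule prod.neutral) (use outside in \<open>auto simp: Transposition.transpose_def\<close>)
    finally show ?thesis using ab by (simp add: sign_swap_id)
  qed
  finally show ?thesis by simp
qed




lemma vec_as_sum: "(v::real^'n) = (\<Sum>l\<in>UNIV. v$l *\<^sub>R axis l 1)"
  by (simp add: vec_eq_iff axis_def if_distrib cong: if_cong)

lemma vnth_deriv: "((\<lambda>x. x $ i) has_derivative (\<lambda>x. x $ i)) F"
  by (rule bounded_linear_imp_has_derivative) (rule bounded_linear_vec_nth)

lemma term_deriv1:
  "((\<lambda>x::real^'n. c * x$i * x$j * x$k) has_derivative
     (\<lambda>h. c * (h$i*y$j*y$k + y$i*h$j*y$k + y$i*y$j*h$k))) (at y)"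
  by (auto intro!: derivative_eq_intros vnth_deriv ext simp: algebra_simps)

lemma term_deriv2:
  "((\<lambda>x::real^'n. c * (a$i*x$j*x$k + x$i*a$j*x$k + x$i*x$j*a$k)) has_derivative
     (\<lambda>h. c * (a$i*(h$j*y$k + y$j*h$k) + h$i*a$j*y$k + y$i*a$j*h$k + h$i*y$j*a$k + y$i*h$j*a$k))) (at y)"
  by (auto intro!: derivative_eq_intros vnth_deriv ext simp: algebra_simps)

lemma hess_facts:
  fixes H0 :: "real^'n \<Rightarrow> real" and J :: "real^'n^'n"
  assumes cub: "homogeneous_cubic H0"
  shows "jacobian (\<lambda>y. J *v grad H0 y) (at x) = J ** hessian H0 x"
    and "transpose (hessian H0 x) = hessian H0 x"
proof -
  obtain c where H: "\<And>x. H0 x = (\<Sum>i\<in>UNIV. \<Sum>j\<in>UNIV. \<Sum>k\<in>UNIV. c i j k * x$i * x$j * x$k)"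
    using cub unfolding homogeneous_cubic_def by blast
  define DH where "DH y h = (\<Sum>i\<in>UNIV. \<Sum>j\<in>UNIV. \<Sum>k\<in>UNIV. c i j k * (h$i*y$j*y$k + y$i*h$j*y$k + y$i*y$j*h$k))" for y h :: "real^'n"
  have Heq: "H0 = (\<lambda>x. \<Sum>i\<in>UNIV. \<Sum>j\<in>UNIV. \<Sum>k\<in>UNIV. c i j k * x$i * x$j * x$k)"
    using H by auto
  have dH: "(H0 has_derivative DH y) (at y)" for y
    unfolding Heq DH_def[abs_def]
    by (intro has_derivative_sum term_deriv1)
  have gradeq: "grad H0 y = (\<chi> l. DH y (axis l 1))" for y
    unfolding grad_def using frechet_derivative_at[OF dH[of y]] by simp
  define \<Phi> where "\<Phi> y a h = (\<Sum>i\<in>UNIV. \<Sum>j\<in>UNIV. \<Sum>k\<in>UNIV. c i j k * (a$i*(h$j*y$k + y$j*h$k) + h$i*a$j*y$k + y$i*a$j*h$k + h$i*y$j*a$k + y$i*h$j*a$k))" for y a h :: "real^'n"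
  define DG where "DG y h = (\<Sum>l\<in>UNIV. \<Phi> y (axis l 1) h *\<^sub>R (axis l 1 :: real^'n))" for y h
  have grad_sum: "grad H0 = (\<lambda>y. \<Sum>l\<in>UNIV. DH y (axis l 1) *\<^sub>R (axis l 1 :: real^'n))"
  proof
    fix y show "grad H0 y = (\<Sum>l\<in>UNIV. DH y (axis l 1) *\<^sub>R (axis l 1 :: real^'n))"
      by (subst vec_as_sum) (simp add: gradeq)
  qed
  have dG: "(grad H0 has_derivative DG y) (at y)" for y
    unfolding grad_sum DG_def[abs_def] DH_def \<Phi>_def
    by (intro has_derivative_sum has_derivative_scaleR_left term_deriv2)
  have hess: "hessian H0 y = matrix (DG y)" for y
    unfolding hessian_def jacobian_def using frechet_derivative_at[OF dG[of y]] by simp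
  have DGc: "DG y h $ l = \<Phi> y (axis l 1) h" for y h l
  proof -
    have "DG y h $ l = (\<Sum>l'\<in>UNIV. if l' = l then \<Phi> y (axis l' 1) h else 0)"
      unfolding DG_def by (simp add: axis_def if_distrib cong: if_cong)
    then show ?thesis by simp
  qed
  have sym: "\<Phi> y a b = \<Phi> y b a" for y a b
    unfolding \<Phi>_def by (intro sum.cong refl) (simp add: algebra_simps)
  show "transpose (hessian H0 x) = hessian H0 x"
    by (simp add: hess vec_eq_iff transpose_def matrix_def DGc sym)
  have dJ: "((\<lambda>y. J *v grad H0 y) has_derivative (\<lambda>h. J *v DG x h)) (at x)"
    by (rule bounded_linear.has_derivative[OF matrix_vector_mul_bounded_linear dG])
  show "jacobian (\<lambda>y. J *v grad H0 y) (at x) = J ** hessian H0 x"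
    unfolding jacobian_def frechet_derivative_at[OF dJ, symmetric] hess
    by (simp add: vec_eq_iff matrix_def mm_nth mv_nth)
qed




definition dg :: "('n \<Rightarrow> 'a::zero) \<Rightarrow> 'a^'n^'n" where
  "dg d = (\<chi> i j. if i = j then d i else 0)"

lemma mm_add_r: "(A + B) ** C = A ** C + B ** (C::'a::comm_ring_1^_^_)"
  by (simp add: vec_eq_iff mm_nth algebra_simps sum.distrib)
lemma mm_add_l: "C ** (A + B) = C ** A + C ** (B::'a::comm_ring_1^_^_)"
  by (simp add: vec_eq_iff mm_nth algebra_simps sum.distrib)
lemma mm_diff_r: "(A - B) ** C = A ** C - B ** (C::'a::comm_ring_1^_^_)"
  by (simp add: vec_eq_iff mm_nth algebra_simps sum_subtractf)
lemma mm_diff_l: "C ** (A - B) = C ** A - C ** (B::'a::comm_ring_1^_^_)"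
  by (simp add: vec_eq_iff mm_nth algebra_simps sum_subtractf)

lemma mat_mm_l: "mat c ** (A::'a::comm_ring_1^'n^'m) = (\<chi> i j. c * A$i$j)"
  by (simp add: vec_eq_iff mat_mult_nth)
lemma mat_mm_r: "(A::'a::comm_ring_1^'n^'m) ** mat c = (\<chi> i j. A$i$j * c)"
proof -
  have "(\<Sum>k\<in>UNIV. A$i$k * (if k = j then c else 0)) = A$i$j * c" for i j
  proof -
    have "(\<Sum>k\<in>UNIV. A$i$k * (if k = j then c else 0)) = (\<Sum>k\<in>UNIV. if k = j then A$i$j * c else 0)"
      by (rule sum.cong) auto
    then show ?thesis by simp
  qed
  then show ?thesis by (simp add: vec_eq_iff mm_nth mat_def)
qed
lemma mat_comm: "mat c ** (A::'a::comm_ring_1^'n^'n) = A ** mat c"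
  by (simp add: mat_mm_l mat_mm_r mult.commute)
lemma mat_mv: "mat c *v (x::'a::comm_ring_1^'n) = c *s x"
proof -
  have "(\<Sum>j\<in>UNIV. (if i = j then c else 0) * x$j) = c * x$i" for i
  proof -
    have "(\<Sum>j\<in>UNIV. (if i = j then c else 0) * x$j) = (\<Sum>j\<in>UNIV. if j = i then c * x$i else 0)"
      by (rule sum.cong) auto
    then show ?thesis by simp
  qed
  then show ?thesis by (simp add: vec_eq_iff mv_nth mat_def)
qed
lemma transpose_diff: "transpose (A - B) = transpose A - transpose B"
  by (simp add: vec_eq_iff transpose_def)
lemma transpose_add: "transpose (A + B) = transpose A + transpose B"
  by (simp add: vec_eq_iff transpose_def)
lemma transpose_neg: "transpose (- A) = - transpose A"
  by (simp add: vec_eq_iff transpose_def)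
lemma transpose_mat_mm: "transpose (mat c ** (A::'a::comm_ring_1^'n^'n)) = mat c ** transpose A"
  by (simp add: matrix_transpose_mul mat_comm)
lemma trace_transpose: "trace (transpose A) = trace A"
  by (simp add: trace_def transpose_def)

lemma dg_mm_l: "dg d ** (A::'a::comm_ring_1^'n^'n) = (\<chi> i j. d i * A$i$j)"
proof -
  have "(\<Sum>k\<in>UNIV. (if i = k then d i else 0) * A$k$j) = d i * A$i$j" for i j
  proof -
    have "(\<Sum>k\<in>UNIV. (if i = k then d i else 0) * A$k$j) = (\<Sum>k\<in>UNIV. if k = i then d i * A$i$j else 0)"
      by (rule sum.cong) auto
    then show ?thesis by simp
  qed
  then show ?thesis by (simp add: vec_eq_iff mm_nth dg_def)
qed
lemma dg_mm_r: "(A::'a::comm_ring_1^'n^'n) ** dg d = (\<chi> i j. A$i$j * d j)"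
proof -
  have "(\<Sum>k\<in>UNIV. A$i$k * (if k = j then d k else 0)) = A$i$j * d j" for i j
  proof -
    have "(\<Sum>k\<in>UNIV. A$i$k * (if k = j then d k else 0)) = (\<Sum>k\<in>UNIV. if k = j then A$i$j * d j else 0)"
      by (rule sum.cong) auto
    then show ?thesis by simp
  qed
  then show ?thesis by (simp add: vec_eq_iff mm_nth dg_def)
qed
lemma dg_mult: "dg a ** dg b = dg (\<lambda>i. a i * (b i :: 'a::comm_ring_1))"
  unfolding dg_mm_l by (simp add: vec_eq_iff dg_def)
lemma dg_diff_mat: "dg a - mat c = dg (\<lambda>i. a i - (c::'a::comm_ring_1))"
  by (simp add: vec_eq_iff dg_def mat_def)
lemma dg_add: "dg a + dg b = dg (\<lambda>i. a i + (b i::'a::comm_ring_1))"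
  by (simp add: vec_eq_iff dg_def)
lemma mat_dg: "mat c = dg (\<lambda>i. c)"
  by (simp add: vec_eq_iff dg_def mat_def)
lemma mat_mm_dg: "mat c ** dg a = dg (\<lambda>i. c * (a i :: 'a::comm_ring_1))"
  by (simp add: mat_dg dg_mult)
lemma trace_dg_mm: "trace (dg d ** A) = (\<Sum>i\<in>UNIV. d i * A$i$(i::'n::finite) :: 'a::comm_ring_1)"
  by (simp add: trace_def dg_mm_l)




lemma pair_indep:
  fixes u w :: "complex^'n"
  assumes u0: "u \<noteq> 0" and wu: "\<forall>c. w \<noteq> c *s u" and eq: "a *s u + b *s w = 0"
  shows "a = 0 \<and> b = 0"
proof -
  have "b = 0"
  proof (rule ccontr)
    assume b: "b \<noteq> 0"
    have "w = (- a / b) *s u"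
    proof -
      have "b *s w = (- a) *s u" using eq by (simp add: vec_eq_iff algebra_simps add_eq_0_iff)
      then have "(1/b) *s (b *s w) = (1/b) *s ((- a) *s u)" by simp
      then show ?thesis using b by (simp add: vector_smult_assoc)
    qed
    then show False using wu by blast
  qed
  then show ?thesis using eq u0 by simp
qed

lemma mv_neg: "(- A) *v x = - (A *v x :: 'a::comm_ring_1^_)"
  by (simp add: vec_eq_iff mv_nth sum_negf)

lemma eigpair:
  fixes M Jc :: "complex^6^6"
  assumes f1: "transpose M ** Jc = Jc ** M"
    and JJ: "Jc ** Jc = - mat 1" and Jt: "transpose Jc = - Jc"
    and d0: "det (mat l - M) = 0"
  shows "\<exists>u w. transpose M *v u = l *s u \<and> transpose M *v w = l *s w \<and> u \<noteq> 0 \<and> (\<forall>c. w \<noteq> c *s u)"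
proof -
  let ?C = "transpose M"
  have MJ: "M ** Jc = Jc ** ?C"
  proof -
    have "Jc ** (?C ** Jc) ** Jc = Jc ** (Jc ** M) ** Jc" using f1 by simp
    then have "(Jc ** ?C) ** (Jc ** Jc) = (Jc ** Jc) ** (M ** Jc)" by (simp add: matrix_mul_assoc)
    then have "- (Jc ** ?C) = - (M ** Jc)" by (simp add: JJ mm_neg_r mm_neg_l)
    then show ?thesis by simp
  qed
  have "det (mat l - ?C) = 0"
  proof -
    have "transpose (mat l - M) = mat l - ?C" by (simp add: transpose_diff)
    then show ?thesis using d0 by (metis det_transpose)
  qed
  then obtain u where u0: "u \<noteq> 0" and uk: "(mat l - ?C) *v u = 0" using det_ne0_iff by blast
  have Cu: "?C *v u = l *s u"
    using uk by (simp add: matrix_vector_mult_diff_rdistrib mat_mv)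
  define K where "K = Jc ** (?C - mat l)"
  have Kt: "transpose K = - K"
  proof -
    have "transpose K = (M - mat l) ** (- Jc)"
      by (simp add: K_def matrix_transpose_mul transpose_diff Jt)
    also have "\<dots> = - (M ** Jc - mat l ** Jc)" by (simp add: mm_neg_r mm_diff_r)
    also have "\<dots> = - (Jc ** ?C - Jc ** mat l)" by (simp add: MJ mat_comm)
    also have "\<dots> = - K" by (simp add: K_def mm_diff_l)
    finally show ?thesis .
  qed
  have Ku: "K *v u = 0"
    using Cu by (simp add: K_def matrix_vector_mul_assoc[symmetric] matrix_vector_mult_diff_rdistrib mat_mv)
  obtain w where Kw: "K *v w = 0" and wu: "\<forall>c. w \<noteq> c *s u"
    using skew_kernel[OF Kt _ Ku u0] by auto
  have "(?C - mat l) *v w = 0"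
  proof -
    have "(Jc ** Jc) *v ((?C - mat l) *v w) = Jc *v (K *v w)"
      by (simp add: K_def matrix_vector_mul_assoc matrix_mul_assoc)
    then have "(Jc ** Jc) *v ((?C - mat l) *v w) = 0" using Kw by simp
    then show ?thesis by (simp add: JJ mv_neg)
  qed
  then have Cw: "?C *v w = l *s w" by (simp add: matrix_vector_mult_diff_rdistrib mat_mv)
  show ?thesis using Cu Cw u0 wu by blast
qed




definition blk :: "6 \<Rightarrow> nat" where
  "blk j = (if j = 0 \<or> j = 1 then 1 else if j = 2 \<or> j = 3 then 2 else 3)"

lemma blk_simps[simp]: "blk 0 = 1" "blk 1 = 1" "blk 2 = 2" "blk 3 = 2" "blk 4 = 3" "blk 5 = 3"
  by (simp_all add: blk_def)

lemma diagonalize: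
  fixes M Jc :: "complex^6^6" and lam :: "nat \<Rightarrow> complex"
  assumes f1: "transpose M ** Jc = Jc ** M"
    and JJ: "Jc ** Jc = - mat 1" and Jt: "transpose Jc = - Jc"
    and d12: "lam 1 \<noteq> lam 2" and d13: "lam 1 \<noteq> lam 3" and d23: "lam 2 \<noteq> lam 3"
    and cp: "\<And>z. det (mat z - M) = ((z - lam 1) * (z - lam 2) * (z - lam 3))^2"
  shows "\<exists>T Ti. Ti ** T = mat 1 \<and> T ** Ti = mat 1 \<and> transpose M ** T = T ** dg (\<lambda>j. lam (blk j))"
proof -
  define C where "C = transpose M"
  have ep: "\<exists>u w. C *v u = lam i *s u \<and> C *v w = lam i *s w \<and> u \<noteq> 0 \<and> (\<forall>c. w \<noteq> c *s u)"
    if "i \<in> {1,2,3}" for i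
  proof -
    have "det (mat (lam i) - M) = 0" using cp[of "lam i"] that by auto
    then show ?thesis unfolding C_def by (rule eigpair[OF f1 JJ Jt])
  qed
  obtain u1 w1 where e1: "C *v u1 = lam 1 *s u1" "C *v w1 = lam 1 *s w1" "u1 \<noteq> 0" "\<forall>c. w1 \<noteq> c *s u1"
    using ep[of 1] by auto
  obtain u2 w2 where e2: "C *v u2 = lam 2 *s u2" "C *v w2 = lam 2 *s w2" "u2 \<noteq> 0" "\<forall>c. w2 \<noteq> c *s u2"
    using ep[of 2] by auto
  obtain u3 w3 where e3: "C *v u3 = lam 3 *s u3" "C *v w3 = lam 3 *s w3" "u3 \<noteq> 0" "\<forall>c. w3 \<noteq> c *s u3"
    using ep[of 3] by auto
  define vv where "vv j = (if j = 0 then u1 else if j = 1 then w1 else if j = 2 then u2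
      else if j = 3 then w2 else if j = 4 then u3 else w3)" for j :: 6
  define mu where "mu j = lam (blk j)" for j :: 6
  have vv_simps: "vv 0 = u1" "vv 1 = w1" "vv 2 = u2" "vv 3 = w2" "vv 4 = u3" "vv 5 = w3"
    by (simp_all add: vv_def)
  have eig: "C *v vv j = mu j *s vv j" for j
  proof -
    have "\<forall>j. C *v vv j = mu j *s vv j"
      unfolding forall6 by (simp add: vv_simps mu_def e1 e2 e3)
    then show ?thesis by blast
  qed
  define T where "T = (\<chi> r c. vv c $ r)"
  have Tx: "T *v x = (\<Sum>c\<in>UNIV. x$c *s vv c)" for x
    by (simp add: vec_eq_iff mv_nth T_def mult.commute)
  have CT: "C ** T = T ** dg mu"
  proof -
    have "(C ** T) $ r $ c = (C *v vv c) $ r" for r c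
      by (simp add: mm_nth mv_nth T_def)
    then show ?thesis by (simp add: vec_eq_iff dg_mm_r eig T_def mult.commute)
  qed
  have lin: "(C - mat l) *v (\<Sum>c\<in>UNIV. a c *s vv c) = (\<Sum>c\<in>UNIV. (a c * (mu c - l)) *s vv c)" for a l
  proof -
    have "(C - mat l) *v (\<Sum>c\<in>UNIV. a c *s vv c) = (\<Sum>c\<in>UNIV. a c *s ((C - mat l) *v vv c))"
      by (simp add: vec.sum vec.scale)
    also have "\<dots> = (\<Sum>c\<in>UNIV. (a c * (mu c - l)) *s vv c)"
      by (rule sum.cong) (simp_all add: matrix_vector_mult_diff_rdistrib mat_mv eig
          vector_smult_assoc algebra_simps vector_ssub_ldistrib vector_sub_rdistrib)
    finally show ?thesis .
  qed
  have Tinj: "x = 0" if Tx0: "T *v x = 0" for x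
  proof -
    have z: "(\<Sum>c\<in>UNIV. x$c *s vv c) = 0" using Tx0 Tx by simp
    have two: "(\<Sum>c\<in>UNIV. (x$c * (mu c - l1) * (mu c - l2)) *s vv c) = 0" for l1 l2
    proof -
      have "(C - mat l2) *v ((C - mat l1) *v (\<Sum>c\<in>UNIV. x$c *s vv c)) = 0" using z by simp
      then show ?thesis by (simp only: lin)
    qed
    have a: "x$0 = 0 \<and> x$1 = 0"
    proof -
      have "(x$0 * ((lam 1 - lam 2) * (lam 1 - lam 3))) *s u1 + (x$1 * ((lam 1 - lam 2) * (lam 1 - lam 3))) *s w1 = 0"
        using two[of "lam 2" "lam 3"] by (simp add: sum6 vv_simps mu_def mult.assoc)
      from pair_indep[OF e1(3) e1(4) this] show ?thesis using d12 d13 by simp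
    qed
    have b: "x$2 = 0 \<and> x$3 = 0"
    proof -
      have "(x$2 * ((lam 2 - lam 1) * (lam 2 - lam 3))) *s u2 + (x$3 * ((lam 2 - lam 1) * (lam 2 - lam 3))) *s w2 = 0"
        using two[of "lam 1" "lam 3"] by (simp add: sum6 vv_simps mu_def mult.assoc)
      from pair_indep[OF e2(3) e2(4) this] show ?thesis using d12 d23 by simp
    qed
    have c: "x$4 = 0 \<and> x$5 = 0"
    proof -
      have "(x$4 * ((lam 3 - lam 1) * (lam 3 - lam 2))) *s u3 + (x$5 * ((lam 3 - lam 1) * (lam 3 - lam 2))) *s w3 = 0"
        using two[of "lam 1" "lam 2"] by (simp add: sum6 vv_simps mu_def mult.assoc)
      from pair_indep[OF e3(3) e3(4) this] show ?thesis using d13 d23 by simp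
    qed
    show ?thesis using a b c by (simp add: vec_eq_iff forall6)
  qed
  have "det T \<noteq> 0" using Tinj det_ne0_iff by blast
  then have "invertible T" by (simp add: invertible_det_nz)
  then obtain Ti where "T ** Ti = mat 1" "Ti ** T = mat 1" unfolding invertible_def by blast
  then show ?thesis using CT unfolding C_def mu_def by blast
qed




lemma conj_mult: assumes "T ** Ti = mat 1"
  shows "Ti ** (X ** Y) ** T = (Ti ** X ** T) ** (Ti ** Y ** (T::'a::comm_ring_1^'n^'n))"
proof -
  have "(Ti ** X ** T) ** (Ti ** Y ** T) = Ti ** X ** (T ** Ti) ** Y ** T"
    by (simp add: matrix_mul_assoc)
  then show ?thesis using assms by (simp add: matrix_mul_assoc)
qed

lemma conj_diff: "Ti ** (X - Y) ** T = Ti ** X ** T - Ti ** Y ** (T::'a::comm_ring_1^'n^'n)"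
  by (simp add: mm_diff_l mm_diff_r)
lemma conj_add: "Ti ** (X + Y) ** T = Ti ** X ** T + Ti ** Y ** (T::'a::comm_ring_1^'n^'n)"
  by (simp add: mm_add_l mm_add_r)
lemma mm_smat_l: "A ** (mat c ** B) = mat c ** (A ** B :: 'a::comm_ring_1^_^_)"
  by (simp add: mat_mm_l vec_eq_iff mm_nth sum_distrib_left mult_ac)
lemma conj_smat: "Ti ** (mat c ** X) ** T = mat c ** (Ti ** X ** (T::'a::comm_ring_1^'n^'n))"
proof -
  have "Ti ** (mat c ** X) ** T = mat c ** (Ti ** X) ** T" by (simp only: mm_smat_l)
  also have "\<dots> = mat c ** (Ti ** X ** T)" by (simp only: matrix_mul_assoc)
  finally show ?thesis .
qed
lemma conj_mat: fixes Ti T :: "'a::comm_ring_1^'n^'n" assumes "Ti ** T = mat 1" shows "Ti ** mat c ** T = (mat c :: 'a::comm_ring_1^'n^'n)"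
proof -
  have "Ti ** mat c = mat c ** Ti" by (rule mat_comm[symmetric])
  then have "Ti ** mat c ** T = mat c ** Ti ** T" by simp
  also have "\<dots> = mat c ** (Ti ** T)" by (simp only: matrix_mul_assoc)
  finally show ?thesis using assms by simp
qed
lemma trace_conj: assumes "T ** Ti = mat 1"
  shows "trace (Ti ** X ** T) = trace (X :: 'a::comm_ring_1^'n^'n)"
proof -
  have "trace (Ti ** X ** T) = trace (T ** (Ti ** X))" by (rule trace_mul_sym)
  also have "\<dots> = trace X" using assms by (simp add: matrix_mul_assoc)
  finally show ?thesis .
qed
lemma trace_neg: "trace (- A) = - trace (A::'a::comm_ring_1^'n^'n)"
  by (simp add: trace_def sum_negf)

lemma trace_skew_sym:
  fixes Jc Y :: "complex^'n^'n"
  assumes "transpose Jc = - Jc" "transpose Y = Y"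
  shows "trace (Jc ** Y) = 0"
proof -
  have "trace (Jc ** Y) = trace (transpose (Jc ** Y))" by (simp add: trace_transpose)
  also have "\<dots> = trace (Y ** (- Jc))" using assms by (simp add: matrix_transpose_mul)
  also have "\<dots> = - trace (Y ** Jc)" by (simp add: mm_neg_r trace_neg)
  also have "trace (Y ** Jc) = trace (Jc ** Y)" by (rule trace_mul_sym)
  finally show ?thesis by simp
qed

lemma blockprod:
  fixes Z :: "'a::comm_ring_1^'n^'n"
  assumes z: "\<And>i k. P i \<Longrightarrow> \<not> P k \<Longrightarrow> Z$i$k = 0" and pq: "\<And>i. \<not> (P i \<and> Q i)"
  shows "(\<chi> i j. if P i then Z$i$j else (if i = j then 1 else 0)) **
         (\<chi> i j. if Q i then Z$i$j else (if i = j then 1 else 0)) =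
         (\<chi> i j. if P i \<or> Q i then Z$i$j else (if i = j then 1 else 0))"
proof -
  let ?W = "(\<chi> i j. if Q i then Z$i$j else (if i = j then 1 else 0)) :: 'a^'n^'n"
  have "(\<Sum>k\<in>UNIV. (if P i then Z$i$k else (if i = k then 1 else 0)) * ?W$k$j) =
        (if P i \<or> Q i then Z$i$j else (if i = j then 1 else 0))" for i j
  proof (cases "P i")
    case True
    have "(\<Sum>k\<in>UNIV. Z$i$k * ?W$k$j) = (\<Sum>k\<in>UNIV. if k = j then (if P j then Z$i$j else 0) else 0)"
    proof (rule sum.cong)
      fix k assume "k \<in> (UNIV::'n set)"
      show "Z$i$k * ?W$k$j = (if k = j then (if P j then Z$i$j else 0) else 0)"
        using z[OF True, of k] pq[of k] by auto
    qed simp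
    also have "\<dots> = Z$i$j" using z[OF True, of j] by simp
    finally show ?thesis using True by simp
  next
    case False
    have "(\<Sum>k\<in>UNIV. (if i = k then 1 else 0) * ?W$k$j) = (\<Sum>k\<in>UNIV. if k = i then ?W$i$j else 0)"
      by (rule sum.cong) auto
    then show ?thesis using False by simp
  qed
  then show ?thesis by (simp add: vec_eq_iff mm_nth)
qed

lemma blk_cases: "blk i = 1 \<or> blk i = 2 \<or> blk i = 3"
  by (simp add: blk_def)
lemma blk1_iff: "blk i = 1 \<longleftrightarrow> i = 0 \<or> i = 1" by (simp add: blk_def)
lemma blk2_iff: "blk i = 2 \<longleftrightarrow> i = 2 \<or> i = 3" by (simp add: blk_def)
lemma blk3_iff: "blk i = 3 \<longleftrightarrow> i = 4 \<or> i = 5"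
proof -
  have "i \<in> {0,1,2,3,4,5}" using UNIV6 by blast
  then show ?thesis by (auto simp: blk_def)
qed

lemma det_blockdiag:
  fixes Z :: "complex^6^6"
  assumes cross: "\<And>i j. blk i \<noteq> blk j \<Longrightarrow> Z$i$j = 0"
  shows "det Z = (Z$0$0 * Z$1$1 - Z$0$1 * Z$1$0) * (Z$2$2 * Z$3$3 - Z$2$3 * Z$3$2)
                 * (Z$4$4 * Z$5$5 - Z$4$5 * Z$5$4)"
proof -
  define R where "R P = (\<chi> i j. if P i then Z$i$j else (if i = j then 1 else 0))" for P :: "6 \<Rightarrow> bool"
  have R12: "R (\<lambda>i. blk i = 1) ** R (\<lambda>i. blk i = 2) = R (\<lambda>i. blk i = 1 \<or> blk i = 2)"
    unfolding R_def by (rule blockprod) (auto intro: cross)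
  have R123: "R (\<lambda>i. blk i = 1 \<or> blk i = 2) ** R (\<lambda>i. blk i = 3) = R (\<lambda>i. (blk i = 1 \<or> blk i = 2) \<or> blk i = 3)"
    unfolding R_def by (rule blockprod) (auto intro: cross)
  have RZ: "R (\<lambda>i. (blk i = 1 \<or> blk i = 2) \<or> blk i = 3) = Z"
    unfolding R_def using blk_cases by (simp add: vec_eq_iff)
  have detR: "det (R (\<lambda>i. blk i = b)) = Z$a$a * Z$c$c - Z$a$c * Z$c$a"
    if ac: "a \<noteq> c" and bl: "\<And>i. blk i = b \<longleftrightarrow> i = a \<or> i = c" for a c b
  proof -
    have "det (R (\<lambda>i. blk i = b)) = R (\<lambda>i. blk i = b)$a$a * R (\<lambda>i. blk i = b)$c$c
            - R (\<lambda>i. blk i = b)$a$c * R (\<lambda>i. blk i = b)$c$a"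
    proof (rule det_block2[OF ac])
      fix i j :: 6 assume h: "i \<notin> {a,c} \<or> j \<notin> {a,c}"
      show "R (\<lambda>i. blk i = b) $ i $ j = (if i = j then 1 else 0)"
      proof (cases "i \<in> {a,c}")
        case True
        then have jn: "j \<notin> {a,c}" using h by blast
        have bi: "blk i = b" using True bl by blast
        have bj: "blk j \<noteq> b" using jn bl by blast
        have ij: "i \<noteq> j" using True jn by blast
        have "Z$i$j = 0" using cross[of i j] bi bj by simp
        then show ?thesis using bi ij unfolding R_def by simp
      next
        case False
        then have "blk i \<noteq> b" using bl by blast
        then show ?thesis unfolding R_def by simp
      qed
    qed
    then show ?thesis using bl unfolding R_def by simp
  qed
  have d1: "det (R (\<lambda>i. blk i = 1)) = Z$0$0 * Z$1$1 - Z$0$1 * Z$1$0"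
    by (rule detR) (simp, rule blk1_iff)
  have d2: "det (R (\<lambda>i. blk i = 2)) = Z$2$2 * Z$3$3 - Z$2$3 * Z$3$2"
    by (rule detR) (simp, rule blk2_iff)
  have d3: "det (R (\<lambda>i. blk i = 3)) = Z$4$4 * Z$5$5 - Z$4$5 * Z$5$4"
    by (rule detR) (simp, rule blk3_iff)
  have "det Z = det (R (\<lambda>i. blk i = 1)) * det (R (\<lambda>i. blk i = 2)) * det (R (\<lambda>i. blk i = 3))"
  proof -
    have "Z = R (\<lambda>i. blk i = 1) ** R (\<lambda>i. blk i = 2) ** R (\<lambda>i. blk i = 3)"
      using R12 R123 RZ by simp
    then show ?thesis by (simp add: det_mul)
  qed
  then show ?thesis using d1 d2 d3 by simp
qed




lemma poly_comm: "(X - mat a) ** (X - mat b) = (X - mat b) ** (X - mat (a::'a::comm_ring_1) :: 'a^'n^'n)"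
  unfolding mm_diff_l mm_diff_r mat_mm_l mat_mm_r by (simp add: vec_eq_iff algebra_simps mat_def)

lemma mu_distinct:
  assumes "lam 1 \<noteq> lam 2" "lam 1 \<noteq> lam 3" "lam 2 \<noteq> lam (3::nat)" "blk i \<noteq> blk j"
  shows "lam (blk i) \<noteq> lam (blk j)"
  using blk_cases[of i] blk_cases[of j] assms by auto

lemma alg_factor:
  fixes a b c e Q :: complex
  assumes "Q = (a*a+b*c + (c*b + a*a))/4"
  shows "(1 - e*a)*(1 - e*(-a)) - (0 - e*b)*(0 - e*c) = 1 - 2*e^2*Q"
  unfolding assms by (simp add: field_simps power2_eq_square)

theorem main_LA:
  fixes M Jc S N :: "complex^6^6" and lam alpha beta gamma q :: "nat \<Rightarrow> complex" and e :: complex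
  assumes f1: "transpose M ** Jc = Jc ** M"
    and f2: "M ** S = S ** transpose M"
    and St: "transpose S = S"
    and JJ: "Jc ** Jc = - mat 1" and Jt: "transpose Jc = - Jc"
    and d12: "lam 1 \<noteq> lam 2" and d13: "lam 1 \<noteq> lam 3" and d23: "lam 2 \<noteq> lam 3"
    and cp: "\<And>z. det (mat z - M) = ((z - lam 1) * (z - lam 2) * (z - lam 3))^2"
    and interp: "\<And>i j. i \<in> {1,2,3} \<Longrightarrow> j \<in> {1,2,3} \<Longrightarrow>
                   alpha i + beta i * lam j + gamma i * (lam j)^2 = (if i = j then -1 else 1)"
    and Ndef: "N = Jc ** S"
    and qdef: "q = (\<lambda>i. trace (transpose (mat (alpha i) + mat (beta i) ** M + mat (gamma i) ** (M ** M)) ** (N ** N)) / 8)"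
  shows "det (mat 1 - mat e ** N) = (1 - 2*e^2*(q 2 + q 3)) * (1 - 2*e^2*(q 1 + q 3)) * (1 - 2*e^2*(q 1 + q 2))"
proof -
  define mu where "mu j = lam (blk j)" for j
  obtain T Ti where TiT: "Ti ** T = mat 1" and TTi: "T ** Ti = mat 1"
    and CT0: "transpose M ** T = T ** dg mu"
    using diagonalize[OF f1 JJ Jt d12 d13 d23 cp] unfolding mu_def by blast
  define C where "C = transpose M"
  define D where "D = dg mu"
  have CT: "C ** T = T ** D" using CT0 by (simp add: C_def D_def)
  have TiCT: "Ti ** C ** T = D"
  proof -
    have "Ti ** C ** T = Ti ** (C ** T)" by (simp add: matrix_mul_assoc)
    also have "\<dots> = (Ti ** T) ** D" by (simp add: CT matrix_mul_assoc)
    finally show ?thesis using TiT by simp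
  qed
  have TiC: "Ti ** C = D ** Ti"
  proof -
    have "Ti ** C = Ti ** C ** (T ** Ti)" using TTi by simp
    also have "\<dots> = (Ti ** C ** T) ** Ti" by (simp add: matrix_mul_assoc)
    finally show ?thesis using TiCT by simp
  qed
  have JM: "Jc ** M = C ** Jc" using f1 by (simp add: C_def)
  have NC: "N ** C = C ** N"
  proof -
    have "N ** C = Jc ** (S ** C)" by (simp add: Ndef matrix_mul_assoc)
    also have "\<dots> = Jc ** (M ** S)" using f2 by (simp add: C_def)
    also have "\<dots> = (Jc ** M) ** S" by (simp add: matrix_mul_assoc)
    also have "\<dots> = C ** N" by (simp add: JM Ndef matrix_mul_assoc)
    finally show ?thesis .
  qed
  define N' where "N' = Ti ** N ** T"
  have N'D: "N' ** D = D ** N'"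
  proof -
    have "N' ** D = (Ti ** N) ** (T ** D)" by (simp add: N'_def matrix_mul_assoc)
    also have "\<dots> = (Ti ** N) ** (C ** T)" by (simp add: CT)
    also have "\<dots> = Ti ** (N ** C) ** T" by (simp add: matrix_mul_assoc)
    also have "\<dots> = Ti ** (C ** N) ** T" by (simp add: NC)
    also have "\<dots> = (Ti ** C) ** N ** T" by (simp add: matrix_mul_assoc)
    also have "\<dots> = D ** Ti ** N ** T" by (simp add: TiC)
    also have "\<dots> = D ** N'" by (simp add: N'_def matrix_mul_assoc)
    finally show ?thesis .
  qed
  have cross: "N'$i$j = 0" if "blk i \<noteq> blk j" for i j
  proof -
    have "(N' ** D) $ i $ j = (D ** N') $ i $ j" using N'D by simp
    then have "N'$i$j * mu j = mu i * N'$i$j" by (simp add: D_def dg_mm_l dg_mm_r)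
    then have "N'$i$j * (mu j - mu i) = 0" by (simp add: algebra_simps)
    moreover have "mu j - mu i \<noteq> 0" using mu_distinct[OF d12 d13 d23 that] by (simp add: mu_def)
    ultimately show ?thesis by simp
  qed
  have detsim: "det (Ti ** X ** T) = det X" for X
  proof -
    have "det Ti * det T = 1" using TiT det_mul[of Ti T] by simp
    then have "det Ti * det X * det T = det X" by (metis mult.commute mult.left_commute mult_1_right)
    then show ?thesis by (simp add: det_mul)
  qed
  have detconj: "det (mat 1 - mat e ** N) = det (mat 1 - mat e ** N')"
  proof -
    have "Ti ** (mat 1 - mat e ** N) ** T = mat 1 - mat e ** N'"
      by (simp only: conj_diff conj_mat[OF TiT] conj_smat N'_def)
    then show ?thesis using detsim by metis
  qed
  define Z where "Z = mat 1 - mat e ** N'"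
  have Zn: "Z$i$j = (if i = j then 1 else 0) - e * N'$i$j" for i j
    unfolding Z_def by (simp add: mat_mult_nth) (simp add: mat_def)
  have Zcross: "Z$i$j = 0" if "blk i \<noteq> blk j" for i j
  proof -
    have "i \<noteq> j" using that by auto
    then show ?thesis using cross[OF that] by (simp add: Zn)
  qed
  have detZ: "det Z = (Z$0$0 * Z$1$1 - Z$0$1 * Z$1$0) * (Z$2$2 * Z$3$3 - Z$2$3 * Z$3$2)
                 * (Z$4$4 * Z$5$5 - Z$4$5 * Z$5$4)"
    by (rule det_blockdiag) (rule Zcross)
  have MS: "(M - mat a) ** S = S ** (C - mat a)" for a
  proof -
    have "(M - mat a) ** S = M ** S - mat a ** S" by (simp add: mm_diff_r)
    also have "\<dots> = S ** C - S ** mat a" by (simp add: f2 C_def mat_comm)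
    also have "\<dots> = S ** (C - mat a)" by (simp add: mm_diff_l)
    finally show ?thesis .
  qed
  have TiDT: "Ti ** (C - mat l) ** T = dg (\<lambda>j. mu j - l)" for l
    by (simp only: conj_diff conj_mat[OF TiT] TiCT D_def dg_diff_mat)
  have tz: "(\<Sum>j\<in>UNIV. (mu j - l1) * (mu j - l2) * N'$j$j) = 0" for l1 l2
  proof -
    let ?P = "(C - mat l1) ** (C - mat l2)"
    have tC: "transpose C = M" by (simp add: C_def)
    have "transpose (S ** ?P) = (M - mat l2) ** (M - mat l1) ** S"
      by (simp add: matrix_transpose_mul transpose_diff tC St matrix_mul_assoc)
    also have "\<dots> = (M - mat l2) ** ((M - mat l1) ** S)" by (simp add: matrix_mul_assoc)
    also have "\<dots> = ((M - mat l2) ** S) ** (C - mat l1)" by (simp add: MS matrix_mul_assoc)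
    also have "\<dots> = S ** ((C - mat l2) ** (C - mat l1))" by (simp add: MS matrix_mul_assoc)
    also have "\<dots> = S ** ?P" by (simp add: poly_comm)
    finally have symP: "transpose (S ** ?P) = S ** ?P" .
    have "trace (N ** ?P) = 0"
      using trace_skew_sym[OF Jt symP] by (simp add: Ndef matrix_mul_assoc)
    moreover have "trace (N ** ?P) = trace (Ti ** (N ** ?P) ** T)" by (simp add: trace_conj[OF TTi])
    moreover have "Ti ** (N ** ?P) ** T = N' ** dg (\<lambda>j. (mu j - l1) * (mu j - l2))"
      by (simp only: conj_mult[OF TTi] TiDT dg_mult N'_def)
    moreover have "trace (N' ** dg (\<lambda>j. (mu j - l1) * (mu j - l2))) = (\<Sum>j\<in>UNIV. (mu j - l1) * (mu j - l2) * N'$j$j)"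
      by (simp add: trace_mul_sym[of N'] trace_dg_mm)
    ultimately show ?thesis by simp
  qed
  have qv: "q i = (\<Sum>j\<in>UNIV. (if blk j = i then -1 else 1) * (N' ** N')$j$j) / 8" if i3: "i \<in> {1,2,3}" for i
  proof -
    let ?Bt = "mat (alpha i) + mat (beta i) ** C + mat (gamma i) ** (C ** C)"
    have Bt: "transpose (mat (alpha i) + mat (beta i) ** M + mat (gamma i) ** (M ** M)) = ?Bt"
    proof -
      have tMM: "transpose (M ** M) = C ** C" by (simp add: matrix_transpose_mul C_def)
      show ?thesis by (simp only: transpose_add transpose_mat_mm tMM transpose_mat C_def[symmetric])
    qed
    have "Ti ** ?Bt ** T = dg (\<lambda>j. alpha i + beta i * mu j + gamma i * (mu j * mu j))"
      unfolding conj_add conj_mat[OF TiT] conj_smat conj_mult[OF TTi] TiCT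
      by (simp only: D_def mat_dg dg_mult dg_add)
    also have "\<dots> = dg (\<lambda>j. if blk j = i then -1 else 1)"
    proof -
      have "alpha i + beta i * mu j + gamma i * (mu j * mu j) = (if blk j = i then -1 else 1)" for j
        using interp[OF i3, of "blk j"] blk_cases[of j] by (auto simp: mu_def power2_eq_square)
      then show ?thesis by simp
    qed
    finally have TBT: "Ti ** ?Bt ** T = dg (\<lambda>j. if blk j = i then -1 else 1)" .
    have "trace (?Bt ** (N ** N)) = trace (Ti ** (?Bt ** (N ** N)) ** T)" by (simp add: trace_conj[OF TTi])
    also have "Ti ** (?Bt ** (N ** N)) ** T = dg (\<lambda>j. if blk j = i then -1 else 1) ** (N' ** N')"
      by (simp only: conj_mult[OF TTi] TBT N'_def)
    finally show ?thesis by (simp add: qdef Bt trace_dg_mm)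
  qed
  have t1: "N'$1$1 = - N'$0$0"
  proof -
    have "(lam 1 - lam 2) * (lam 1 - lam 3) * (N'$0$0 + N'$1$1) = 0"
      using tz[of "lam 2" "lam 3"] by (simp add: sum6 mu_def algebra_simps)
    then show ?thesis using d12 d13 by (simp add: add_eq_0_iff)
  qed
  have t2: "N'$3$3 = - N'$2$2"
  proof -
    have "(lam 2 - lam 1) * (lam 2 - lam 3) * (N'$2$2 + N'$3$3) = 0"
      using tz[of "lam 1" "lam 3"] by (simp add: sum6 mu_def algebra_simps)
    then show ?thesis using d12 d23 by (simp add: add_eq_0_iff)
  qed
  have t3: "N'$5$5 = - N'$4$4"
  proof -
    have "(lam 3 - lam 1) * (lam 3 - lam 2) * (N'$4$4 + N'$5$5) = 0"
      using tz[of "lam 1" "lam 2"] by (simp add: sum6 mu_def algebra_simps)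
    then show ?thesis using d13 d23 by (simp add: add_eq_0_iff)
  qed
  have sq: "(N' ** N')$0$0 = N'$0$0 * N'$0$0 + N'$0$1 * N'$1$0"
     "(N' ** N')$1$1 = N'$1$0 * N'$0$1 + N'$1$1 * N'$1$1"
     "(N' ** N')$2$2 = N'$2$2 * N'$2$2 + N'$2$3 * N'$3$2"
     "(N' ** N')$3$3 = N'$3$2 * N'$2$3 + N'$3$3 * N'$3$3"
     "(N' ** N')$4$4 = N'$4$4 * N'$4$4 + N'$4$5 * N'$5$4"
     "(N' ** N')$5$5 = N'$5$4 * N'$4$5 + N'$5$5 * N'$5$5"
    by (simp_all add: mm_nth sum6 cross)
  let ?W1 = "(N' ** N')$0$0 + (N' ** N')$1$1"
  let ?W2 = "(N' ** N')$2$2 + (N' ** N')$3$3"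
  let ?W3 = "(N' ** N')$4$4 + (N' ** N')$5$5"
  have q1: "q 1 = (- ?W1 + ?W2 + ?W3)/8" using qv[of 1] by (simp add: sum6)
  have q2: "q 2 = (?W1 - ?W2 + ?W3)/8" using qv[of 2] by (simp add: sum6)
  have q3: "q 3 = (?W1 + ?W2 - ?W3)/8" using qv[of 3] by (simp add: sum6)
  have f1': "(1 - e*N'$0$0)*(1 - e*(- N'$0$0)) - (0 - e*N'$0$1)*(0 - e*N'$1$0) = 1 - 2*e^2*(q 2 + q 3)"
    by (rule alg_factor) (simp add: q2 q3 sq t1 field_simps)
  have f2': "(1 - e*N'$2$2)*(1 - e*(- N'$2$2)) - (0 - e*N'$2$3)*(0 - e*N'$3$2) = 1 - 2*e^2*(q 1 + q 3)"
    by (rule alg_factor) (unfold q1 q3, simp add: sq t2 field_simps)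
  have f3': "(1 - e*N'$4$4)*(1 - e*(- N'$4$4)) - (0 - e*N'$4$5)*(0 - e*N'$5$4) = 1 - 2*e^2*(q 1 + q 2)"
    by (rule alg_factor) (unfold q1 q2, simp add: sq t3 field_simps)
  have "det (mat 1 - mat e ** N) = det Z" using detconj by (simp add: Z_def)
  also have "\<dots> = ((1 - e*N'$0$0)*(1 - e*(- N'$0$0)) - (0 - e*N'$0$1)*(0 - e*N'$1$0))
     * ((1 - e*N'$2$2)*(1 - e*(- N'$2$2)) - (0 - e*N'$2$3)*(0 - e*N'$3$2))
     * ((1 - e*N'$4$4)*(1 - e*(- N'$4$4)) - (0 - e*N'$4$5)*(0 - e*N'$5$4))"
    unfolding detZ Zn using t1 t2 t3 by simp
  finally show ?thesis using f1' f2' f3' by simp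
qed



theorem mainTheorem16:
  fixes A :: "real^6^6" and H0 :: "real^6 \<Rightarrow> real"
    and lam alpha beta gamma :: "nat \<Rightarrow> complex"
  assumes skewHam: "transpose A ** Jsymp = Jsymp ** A"
    and cubic: "homogeneous_cubic H0"
    and comm: "\<And>x. A ** hessian H0 x = hessian H0 x ** transpose A"
    and generic_distinct: "lam 1 \<noteq> lam 2" "lam 1 \<noteq> lam 3" "lam 2 \<noteq> lam 3"
    and generic_charpoly: "\<And>z. det (mat z - cmat A)
                          = ((z - lam 1) * (z - lam 2) * (z - lam 3))^2"
    and interp: "\<And>i j. i \<in> {1,2,3} \<Longrightarrow> j \<in> {1,2,3} \<Longrightarrow>
                   alpha i + beta i * lam j + gamma i * (lam j)^2 = (if i = j then -1 else 1)"
    and nondeg: "\<exists>x. det (jacobian (\<lambda>y. Jsymp *v grad H0 y) (at x)) \<noteq> 0"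
  shows "\<forall>(x::real^6) (\<epsilon>::real).
    (let f' = cmat (jacobian (\<lambda>y. Jsymp *v grad H0 y) (at x));
         B = (\<lambda>i. mat (alpha i) + mat (beta i) ** cmat A
                   + mat (gamma i) ** (cmat A ** cmat A));
         q = (\<lambda>i. trace (transpose (B i) ** (f' ** f')) / 8);
         e = complex_of_real \<epsilon>;
         s1 = 1 - 2 * e^2 * (q 2 + q 3);
         s2 = 1 - 2 * e^2 * (q 1 + q 3);
         s3 = 1 - 2 * e^2 * (q 1 + q 2)
     in complex_of_real (det (mat 1 - \<epsilon> *\<^sub>R jacobian (\<lambda>y. Jsymp *v grad H0 y) (at x)))
        = s1 * s2 * s3)"
proof (intro allI)
  fix x :: "real^6" and \<epsilon> :: real
  define F where "F = jacobian (\<lambda>y. Jsymp *v grad H0 y) (at x)"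
  have FH: "F = Jsymp ** hessian H0 x" unfolding F_def by (rule hess_facts(1)[OF cubic])
  have Hs: "transpose (hessian H0 x) = hessian H0 x" by (rule hess_facts(2)[OF cubic])
  define q where "q = (\<lambda>i. trace (transpose (mat (alpha i) + mat (beta i) ** cmat A
                   + mat (gamma i) ** (cmat A ** cmat A)) ** (cmat F ** cmat F)) / 8)"
  have f1: "transpose (cmat A) ** cmat Jsymp = cmat Jsymp ** cmat A"
    using arg_cong[OF skewHam, of cmat] by (simp add: cmat_mult cmat_transpose)
  have f2: "cmat A ** cmat (hessian H0 x) = cmat (hessian H0 x) ** transpose (cmat A)"
    using arg_cong[OF comm[of x], of cmat] by (simp add: cmat_mult cmat_transpose)
  have St: "transpose (cmat (hessian H0 x)) = cmat (hessian H0 x)"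
    using Hs by (simp add: cmat_transpose[symmetric])
  have JJ: "cmat Jsymp ** cmat Jsymp = - mat 1"
    using arg_cong[OF Jsymp_sq, of cmat] by (simp add: cmat_mult cmat_uminus cmat_mat)
  have Jt: "transpose (cmat Jsymp) = - cmat Jsymp"
    using arg_cong[OF Jsymp_transpose, of cmat] by (simp add: cmat_transpose cmat_uminus)
  have Ndef: "cmat F = cmat Jsymp ** cmat (hessian H0 x)" by (simp add: FH cmat_mult)
  have LA: "det (mat 1 - mat (complex_of_real \<epsilon>) ** cmat F) =
      (1 - 2*(complex_of_real \<epsilon>)^2*(q 2 + q 3)) * (1 - 2*(complex_of_real \<epsilon>)^2*(q 1 + q 3))
      * (1 - 2*(complex_of_real \<epsilon>)^2*(q 1 + q 2))"
    by (rule main_LA[OF f1 f2 St JJ Jt generic_distinct generic_charpoly interp Ndef q_def])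
  have "complex_of_real (det (mat 1 - \<epsilon> *\<^sub>R F)) = det (mat 1 - mat (complex_of_real \<epsilon>) ** cmat F)"
    by (simp add: det_cmat[symmetric] cmat_diff cmat_mat cmat_scaleR)
  then show "let f' = cmat (jacobian (\<lambda>y. Jsymp *v grad H0 y) (at x));
         B = (\<lambda>i. mat (alpha i) + mat (beta i) ** cmat A
                   + mat (gamma i) ** (cmat A ** cmat A));
         q = (\<lambda>i. trace (transpose (B i) ** (f' ** f')) / 8);
         e = complex_of_real \<epsilon>;
         s1 = 1 - 2 * e^2 * (q 2 + q 3);
         s2 = 1 - 2 * e^2 * (q 1 + q 3);
         s3 = 1 - 2 * e^2 * (q 1 + q 2)
     in complex_of_real (det (mat 1 - \<epsilon> *\<^sub>R jacobian (\<lambda>y. Jsymp *v grad H0 y) (at x)))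
        = s1 * s2 * s3"
    unfolding Let_def F_def[symmetric] using LA unfolding q_def by simp
qed


end
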